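(* Let $h>0$, $\mathbb{T}:=\{0,h,2h,\ldots\}$, $p_0,p_1\in\mathbb{C}\setminus\{-\tfrac1h\}$ with $p_0\ne p_1$, and define $p:\mathbb{T}\to\mathbb{C}$ by $p(t)=p_0$ if $\tfrac th$ is even and $p(t)=p_1$ if $\tfrac th$ is odd. Let $f:\mathbb{T}\times\mathbb{C}\to\mathbb{C}$ and consider $$\Delta_h\phi(t)-p(t)\phi(t)=f(t,\phi(t)),\qquad t\in\mathbb{T},\qquad(\ast\ast)$$ with $\Delta_h\phi(t):=\frac{\phi(t+h)-\phi(t)}{h}$. Let $\delta>0$ be arbitrary. Suppose there exists $L>0$ with $|f(t,\phi)|\le L$ for all $(t,\phi)\in\mathbb{T}\times\mathbb{C}$, and that all solutions of $(\ast\ast)$ exist on $\mathbb{T}$. If $0<|1+hp_0||1+hp_1|<1$, then all solutions of $(\ast\ast)$ are uniform-ultimately bounded for the bound $LK_0+\delta$, where $$K_0:=h\max\left\{\frac{1+|1+hp_0|}{\big|1-|1+hp_0||1+hp_1|\big|},\ \frac{1+|1+hp_1|}{\big|1-|1+hp_0||1+hp_1|\big|}\right\}.$$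
   Context: The solutions of $(\ast\ast)$ are uniform-ultimately bounded for a bound $B>0$ if for every $\alpha>0$ there exists $T(\alpha)>0$ such that for every $\phi_0\in\mathbb{C}$ with $|\phi_0|<\alpha$, the solution $\phi$ of $(\ast\ast)$ with $\phi(0)=\phi_0$ satisfies $|\phi(t)|<B$ for all $t\in\mathbb{T}$ with $t\ge T(\alpha)$. *)

theory Defs
  imports "HOL-Analysis.Analysis"
begin

definition tscale :: "real \<Rightarrow> real set" where
  "tscale h = {real n * h | n :: nat. True}"

definition pfun :: "real \<Rightarrow> complex \<Rightarrow> complex \<Rightarrow> real \<Rightarrow> complex" where
  "pfun h p0 p1 t = (if \<exists>n :: nat. t = real (2 * n) * h then p0 else p1)"

definition delta_h :: "real \<Rightarrow> (real \<Rightarrow> complex) \<Rightarrow> real \<Rightarrow> complex" where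
  "delta_h h \<phi> t = (\<phi> (t + h) - \<phi> t) / complex_of_real h"

definition is_solution ::
  "real \<Rightarrow> (real \<Rightarrow> complex) \<Rightarrow> (real \<Rightarrow> complex \<Rightarrow> complex) \<Rightarrow> (real \<Rightarrow> complex) \<Rightarrow> bool" where
  "is_solution h p f \<phi> \<longleftrightarrow>
     (\<forall>t \<in> tscale h. delta_h h \<phi> t - p t * \<phi> t = f t (\<phi> t))"

definition uniform_ultimately_bounded ::
  "real \<Rightarrow> (real \<Rightarrow> complex) \<Rightarrow> (real \<Rightarrow> complex \<Rightarrow> complex) \<Rightarrow> real \<Rightarrow> bool" where
  "uniform_ultimately_bounded h p f B \<longleftrightarrow>
     (\<forall>\<alpha> > 0. \<exists>T > 0. \<forall>\<phi>. is_solution h p f \<phi> \<and> cmod (\<phi> 0) < \<alpha> \<longrightarrow>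
        (\<forall>t \<in> tscale h. t \<ge> T \<longrightarrow> cmod (\<phi> t) < B))"

end

theory Submission
  imports Defs
begin

lemma rec_bounds:
  fixes x g :: "nat \<Rightarrow> complex" and a b :: complex and h L q :: real
  assumes rec: "\<And>n. x (Suc n) = (if even n then a else b) * x n + h * g n"
    and gb: "\<And>n. cmod (g n) \<le> L" and h: "h > 0"
    and q: "q = cmod a * cmod b" and q1: "q < 1"
  shows "cmod (x (2*k)) \<le> q^k * cmod (x 0) + h * L * (1 + cmod b) / (1 - q)"
proof (induction k)
  case 0
  have "0 \<le> L" using gb[of 0] norm_ge_zero order_trans by blast
  then show ?case using h q1 by simp
next
  case (Suc k)
  define Me where "Me = h * L * (1 + cmod b) / (1 - q)"
  have eq: "x (2 * Suc k) = a * b * x (2*k) + h * (b * g (2*k) + g (2*k+1))"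
    using rec[of "2*k"] rec[of "2*k+1"] by (simp add: algebra_simps)
  have "cmod (x (2 * Suc k)) \<le> cmod (a*b*x (2*k)) + cmod (h * (b * g (2*k) + g (2*k+1)))"
    unfolding eq by (rule norm_triangle_ineq)
  also have "cmod (a*b*x (2*k)) = q * cmod (x (2*k))" by (simp add: q norm_mult)
  also have "cmod (h * (b * g (2*k) + g (2*k+1))) \<le> h * (cmod b * L + L)"
  proof -
    have "cmod (b * g (2*k) + g (2*k+1)) \<le> cmod b * L + L"
      using norm_triangle_ineq[of "b * g (2*k)" "g (2*k+1)"] gb[of "2*k"] gb[of "2*k+1"]
        mult_left_mono[OF gb[of "2*k"] norm_ge_zero[of b]]
      by (simp add: norm_mult)
    then show ?thesis using h by (simp add: norm_mult mult_left_mono)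
  qed
  finally have A: "cmod (x (2 * Suc k)) \<le> q * cmod (x (2*k)) + h * L * (1 + cmod b)"
    by (simp add: algebra_simps)
  have q0: "0 \<le> q" by (simp add: q)
  have B: "q * cmod (x (2*k)) \<le> q * (q^k * cmod (x 0) + Me)"
    using Suc.IH q0 mult_left_mono unfolding Me_def by blast
  have C: "q * Me + h * L * (1 + cmod b) = Me"
    unfolding Me_def using q1 by (simp add: field_simps)
  show ?case using A B C unfolding Me_def[symmetric] by (simp add: algebra_simps)
qed

lemma rec_bounds_odd:
  fixes x g :: "nat \<Rightarrow> complex" and a b :: complex and h L q :: real
  assumes rec: "\<And>n. x (Suc n) = (if even n then a else b) * x n + h * g n"
    and gb: "\<And>n. cmod (g n) \<le> L" and h: "h > 0"
    and q: "q = cmod a * cmod b" and q1: "q < 1"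
  shows "cmod (x (2*k+1)) \<le> cmod a * q^k * cmod (x 0) + h * L * (1 + cmod a) / (1 - q)"
proof -
  have E: "cmod (x (2*k)) \<le> q^k * cmod (x 0) + h * L * (1 + cmod b) / (1 - q)"
    by (rule rec_bounds[OF rec gb h q q1])
  have eq: "x (2*k+1) = a * x (2*k) + h * g (2*k)" using rec[of "2*k"] by simp
  have hg: "h * cmod (g (2*k)) \<le> h * L" using gb[of "2*k"] h by simp
  have tri: "cmod (x (2*k+1)) \<le> cmod a * cmod (x (2*k)) + h * cmod (g (2*k))"
    using norm_triangle_ineq[of "a * x (2*k)" "h * g (2*k)"] h
    unfolding eq by (simp add: norm_mult)
  have "cmod (x (2*k+1)) \<le> cmod a * cmod (x (2*k)) + h * L"
    using tri hg by linarith
  also have "\<dots> \<le> cmod a * (q^k * cmod (x 0) + h * L * (1 + cmod b) / (1 - q)) + h * L"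
    using E by (simp add: mult_left_mono)
  also have "\<dots> = cmod a * q^k * cmod (x 0) + h * L * (1 + cmod a) / (1 - q)"
    using q1 by (simp add: field_simps q)
  finally show ?thesis .
qed

theorem corollary3p1:
  fixes h :: real and p0 p1 :: complex and f :: "real \<Rightarrow> complex \<Rightarrow> complex"
    and \<delta> L :: real
  assumes h: "h > 0"
    and p0: "p0 \<noteq> - 1 / complex_of_real h" and p1: "p1 \<noteq> - 1 / complex_of_real h"
    and p01: "p0 \<noteq> p1"
    and \<delta>: "\<delta> > 0"
    and L: "L > 0" and bdd: "\<forall>t \<in> tscale h. \<forall>x. cmod (f t x) \<le> L"
    and exist: "\<forall>\<phi>0. \<exists>\<phi>. is_solution h (pfun h p0 p1) f \<phi> \<and> \<phi> 0 = \<phi>0"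
    and pos: "0 < cmod (1 + h * p0) * cmod (1 + h * p1)"
    and lt1: "cmod (1 + h * p0) * cmod (1 + h * p1) < 1"
  shows "uniform_ultimately_bounded h (pfun h p0 p1) f
           (L * (h * max ((1 + cmod (1 + h * p0)) / \<bar>1 - cmod (1 + h * p0) * cmod (1 + h * p1)\<bar>)
                         ((1 + cmod (1 + h * p1)) / \<bar>1 - cmod (1 + h * p0) * cmod (1 + h * p1)\<bar>)) + \<delta>)"
proof -
  define a where "a = 1 + h * p0"
  define b where "b = 1 + h * p1"
  define q where "q = cmod a * cmod b"
  have q1: "q < 1" and q0: "0 \<le> q" using lt1 by (auto simp: q_def a_def b_def)
  have absq: "\<bar>1 - q\<bar> = 1 - q" using q1 by simp
  define K where "K = L * (h * max ((1 + cmod a) / (1 - q)) ((1 + cmod b) / (1 - q)))"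
  have Ka: "h * L * (1 + cmod a) / (1 - q) \<le> K"
  proof -
    have "h * L * (1 + cmod a) / (1 - q) = L * (h * ((1 + cmod a) / (1 - q)))" by simp
    also have "\<dots> \<le> K" unfolding K_def using L h
      by (intro mult_left_mono) auto
    finally show ?thesis .
  qed
  have Kb: "h * L * (1 + cmod b) / (1 - q) \<le> K"
  proof -
    have "h * L * (1 + cmod b) / (1 - q) = L * (h * ((1 + cmod b) / (1 - q)))" by simp
    also have "\<dots> \<le> K" unfolding K_def using L h
      by (intro mult_left_mono) auto
    finally show ?thesis .
  qed
  have pf: "pfun h p0 p1 (real n * h) = (if even n then p0 else p1)" for n
  proof -
    have "(\<exists>m::nat. real n * h = real (2 * m) * h) \<longleftrightarrow> even n"
    proof
      assume "\<exists>m::nat. real n * h = real (2 * m) * h"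
      then obtain m where "real n * h = real (2 * m) * h" by blast
      then have "n = 2 * m" using h by (metis of_nat_eq_iff mult_right_cancel less_irrefl)
      then show "even n" by simp
    next
      assume "even n" then show "\<exists>m::nat. real n * h = real (2 * m) * h" by auto
    qed
    then show ?thesis unfolding pfun_def by simp
  qed
  have main: "\<forall>\<alpha>>0. \<exists>T>0. \<forall>\<phi>. is_solution h (pfun h p0 p1) f \<phi> \<and> cmod (\<phi> 0) < \<alpha> \<longrightarrow>
        (\<forall>t \<in> tscale h. t \<ge> T \<longrightarrow> cmod (\<phi> t) < K + \<delta>)"
  proof (intro allI impI)
    fix \<alpha> :: real assume \<alpha>: "\<alpha> > 0"
    have "\<exists>N. q ^ N < \<delta> / (\<alpha> * (1 + cmod a))"
      using real_arch_pow_inv[OF _ q1, of "\<delta> / (\<alpha> * (1 + cmod a))"] \<alpha> \<delta>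
      by (simp add: add_pos_nonneg)
    then obtain N where N: "q ^ N < \<delta> / (\<alpha> * (1 + cmod a))" by blast
    show "\<exists>T>0. \<forall>\<phi>. is_solution h (pfun h p0 p1) f \<phi> \<and> cmod (\<phi> 0) < \<alpha> \<longrightarrow>
        (\<forall>t \<in> tscale h. t \<ge> T \<longrightarrow> cmod (\<phi> t) < K + \<delta>)"
    proof (intro exI[of _ "real (2*N+1) * h"] conjI allI impI ballI)
      show "0 < real (2 * N + 1) * h" using h by simp
      fix \<phi> t
      assume sol: "is_solution h (pfun h p0 p1) f \<phi> \<and> cmod (\<phi> 0) < \<alpha>"
        and t: "t \<in> tscale h" and tT: "real (2 * N + 1) * h \<le> t"
      obtain n where tn: "t = real n * h" using t unfolding tscale_def by blast
      have nN: "2*N+1 \<le> n" using tT tn h by (simp add: mult_le_cancel_right)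
      define x where "x = (\<lambda>n. \<phi> (real n * h))"
      define g where "g = (\<lambda>n. f (real n * h) (x n))"
      have hc: "complex_of_real h \<noteq> 0" using h by simp
      have rec: "x (Suc n) = (if even n then a else b) * x n + h * g n" for n
      proof -
        have "real n * h \<in> tscale h" unfolding tscale_def by blast
        then have "delta_h h \<phi> (real n * h) - pfun h p0 p1 (real n * h) * \<phi> (real n * h)
                = f (real n * h) (\<phi> (real n * h))" using sol unfolding is_solution_def by blast
        then have "(x (Suc n) - x n) / h - (if even n then p0 else p1) * x n = g n"
          unfolding delta_h_def pf x_def g_def by (simp add: algebra_simps)
        then have "x (Suc n) - x n = h * ((if even n then p0 else p1) * x n + g n)"
          using hc by (simp add: field_simps)
        then show ?thesis unfolding a_def b_def by (simp add: algebra_simps)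
      qed
      have gb: "cmod (g n) \<le> L" for n
        using bdd unfolding g_def tscale_def by blast
      have x0: "cmod (x 0) < \<alpha>" using sol unfolding x_def by simp
      have key: "(1 + cmod a) * q ^ k * cmod (x 0) < \<delta>" if "N \<le> k" for k
      proof -
        have "q ^ k \<le> q ^ N" using power_decreasing[OF that q0] q1 by simp
        then have "(1 + cmod a) * q ^ k * cmod (x 0) \<le> (1 + cmod a) * q ^ N * \<alpha>"
          using x0 q0 by (intro mult_mono) (auto intro: mult_left_mono)
        also have "\<dots> < \<delta>" using N \<alpha> by (simp add: field_simps add_pos_nonneg)
        finally show ?thesis .
      qed
      have "cmod (x n) < K + \<delta>"
      proof (cases "even n")
        case True
        then obtain k where k: "n = 2*k" by blast
        have "N \<le> k" using nN k by simp
        have "cmod (x (2*k)) \<le> q^k * cmod (x 0) + h * L * (1 + cmod b) / (1 - q)"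
          by (rule rec_bounds[OF rec gb h q_def q1])
        moreover have "q^k * cmod (x 0) \<le> (1 + cmod a) * q ^ k * cmod (x 0)"
        proof -
          have "0 \<le> q^k * cmod (x 0)" using q0 by simp
          then have "1 * (q^k * cmod (x 0)) \<le> (1 + cmod a) * (q ^ k * cmod (x 0))"
            by (intro mult_right_mono) auto
          then show ?thesis by (simp add: mult.assoc)
        qed
        ultimately show ?thesis using key[OF \<open>N \<le> k\<close>] Kb unfolding k by linarith
      next
        case False
        then obtain k where k: "n = 2*k+1" using oddE by blast
        have "N \<le> k" using nN k by simp
        have "cmod (x (2*k+1)) \<le> cmod a * q^k * cmod (x 0) + h * L * (1 + cmod a) / (1 - q)"
          by (rule rec_bounds_odd[OF rec gb h q_def q1])
        moreover have "cmod a * q^k * cmod (x 0) \<le> (1 + cmod a) * q ^ k * cmod (x 0)"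
          using q0 by (simp add: mult_right_mono)
        ultimately show ?thesis using key[OF \<open>N \<le> k\<close>] Ka unfolding k by linarith
      qed
      then show "cmod (\<phi> t) < K + \<delta>" unfolding x_def tn .
    qed
  qed
  show ?thesis
    unfolding uniform_ultimately_bounded_def
    using main unfolding K_def q_def a_def b_def absq[unfolded q_def a_def b_def] .
qed

end
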